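(* Let $\rho$ be a smooth function on an open interval $I\subset(0,\infty)$ or $I\subset(-\infty,0)$ with $\rho(t)\neq0$ for all $t\in I$, and let $\mu,\sigma$ be nonzero constants. Let $U(r,y),V(r,y)$ be smooth functions on $\mathbb{R}^2$ and define, for $(x,y,t)\in\mathbb{R}^2\times I$, $$u(x,y,t)=\Big(\frac{\rho(t)}{t}\Big)^{1/3}U\Big(\Big(\frac{\rho(t)}{t}\Big)^{1/3}x,\,y\Big),\qquad v(x,y,t)=\Big(\frac{\rho(t)}{t}\Big)^{2/3}V\Big(\Big(\frac{\rho(t)}{t}\Big)^{1/3}x,\,y\Big)-\frac{\rho'(t)}{9\mu}x,$$ with real cube roots. Then $(u,v)$ solves $$\rho(t)u_t+3\mu(uv)_x+\sigma u_{xxx}=0,\qquad u_x=v_y$$ if and only if $(U,V)$ solves $$-\tfrac13\big(U+rU_r\big)+3\mu(UV)_r+\sigma U_{rrr}=0,\qquad U_r-V_y=0.$$ *)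

theory Defs
  imports "HOL-Analysis.Analysis"
begin

text \<open>C-infinity functions of one real variable on an open set S:
  differentiable at every point of S with a derivative that is again C-infinity on S
  (hence all derivatives exist and are continuous on S).\<close>
coinductive smooth1_on :: "real set \<Rightarrow> (real \<Rightarrow> real) \<Rightarrow> bool" where
  "(\<And>t. t \<in> S \<Longrightarrow> (f has_real_derivative f' t) (at t)) \<Longrightarrow> smooth1_on S f'
    \<Longrightarrow> smooth1_on S f"

text \<open>C-infinity functions on the whole plane R^2 (written in curried form f x y):
  continuous, both first partial derivatives exist everywhere and are again
  C-infinity.  Thus all iterated partial derivatives exist and are continuous.\<close>
coinductive smooth2 :: "(real \<Rightarrow> real \<Rightarrow> real) \<Rightarrow> bool" where
  "continuous_on UNIV (\<lambda>p. f (fst p) (snd p))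
   \<Longrightarrow> (\<And>x y. ((\<lambda>s. f s y) has_real_derivative fx x y) (at x))
   \<Longrightarrow> (\<And>x y. ((\<lambda>s. f x s) has_real_derivative fy x y) (at y))
   \<Longrightarrow> smooth2 fx \<Longrightarrow> smooth2 fy \<Longrightarrow> smooth2 f"

end

theory Submission
  imports Defs
begin

lemma deriv_scaled:
  assumes "\<And>z. (f has_real_derivative f' z) (at z)"
  shows "deriv (\<lambda>z. a * f (c * z)) = (\<lambda>z. a * c * f' (c * z))"
proof
  fix z
  have "((\<lambda>z. a * f (c * z)) has_real_derivative a * (f' (c * z) * c)) (at z)"
    by (rule DERIV_cmult, rule DERIV_chain2[OF assms], auto intro!: derivative_eq_intros)
  then show "deriv (\<lambda>z. a * f (c * z)) z = a * c * f' (c * z)"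
    by (simp add: DERIV_imp_deriv mult_ac)
qed

lemma smooth2_D:
  assumes "smooth2 f"
  obtains fx fy where "\<And>x y. ((\<lambda>s. f s y) has_real_derivative fx x y) (at x)"
    "\<And>x y. ((\<lambda>s. f x s) has_real_derivative fy x y) (at y)" "smooth2 fx" "smooth2 fy"
  using assms by (cases rule: smooth2.cases) blast

theorem mainTheorem4:
  fixes \<rho> :: "real \<Rightarrow> real" and I :: "real set" and \<mu> \<sigma> :: real
    and U V :: "real \<Rightarrow> real \<Rightarrow> real"
    and u v :: "real \<Rightarrow> real \<Rightarrow> real \<Rightarrow> real"
  assumes I_open: "open I" and I_interval: "is_interval I" and I_ne: "I \<noteq> {}"
    and I_sign: "I \<subseteq> {0<..} \<or> I \<subseteq> {..<0}"
    and \<rho>_smooth: "smooth1_on I \<rho>"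
    and \<rho>_nz: "\<forall>t\<in>I. \<rho> t \<noteq> 0"
    and \<mu>_nz: "\<mu> \<noteq> 0" and \<sigma>_nz: "\<sigma> \<noteq> 0"
    and U_smooth: "smooth2 U" and V_smooth: "smooth2 V"
    and u_def: "u = (\<lambda>x y t. root 3 (\<rho> t / t) * U (root 3 (\<rho> t / t) * x) y)"
    and v_def: "v = (\<lambda>x y t. (root 3 (\<rho> t / t))^2 * V (root 3 (\<rho> t / t) * x) y
                          - deriv \<rho> t / (9 * \<mu>) * x)"
  shows "(\<forall>x y. \<forall>t\<in>I.
            \<rho> t * deriv (\<lambda>s. u x y s) t
              + 3 * \<mu> * deriv (\<lambda>z. u z y t * v z y t) x
              + \<sigma> * deriv (deriv (deriv (\<lambda>z. u z y t))) x = 0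
            \<and> deriv (\<lambda>z. u z y t) x = deriv (\<lambda>w. v x w t) y)
       \<longleftrightarrow>
         (\<forall>r y.
            - (1/3) * (U r y + r * deriv (\<lambda>z. U z y) r)
              + 3 * \<mu> * deriv (\<lambda>z. U z y * V z y) r
              + \<sigma> * deriv (deriv (deriv (\<lambda>z. U z y))) r = 0
            \<and> deriv (\<lambda>z. U z y) r - deriv (\<lambda>w. V r w) y = 0)"
proof -
  obtain Ux Uy where Ux: "\<And>x y. ((\<lambda>s. U s y) has_real_derivative Ux x y) (at x)"
    and Uy: "\<And>x y. ((\<lambda>s. U x s) has_real_derivative Uy x y) (at y)" and sUx: "smooth2 Ux"
    using smooth2_D[OF U_smooth] by metis
  obtain Uxx where Uxx: "\<And>x y. ((\<lambda>s. Ux s y) has_real_derivative Uxx x y) (at x)"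
    and sUxx: "smooth2 Uxx"
    using smooth2_D[OF sUx] by metis
  obtain Uxxx where Uxxx: "\<And>x y. ((\<lambda>s. Uxx s y) has_real_derivative Uxxx x y) (at x)"
    using smooth2_D[OF sUxx] by metis
  obtain Vx Vy where Vx: "\<And>x y. ((\<lambda>s. V s y) has_real_derivative Vx x y) (at x)"
    and Vy: "\<And>x y. ((\<lambda>s. V x s) has_real_derivative Vy x y) (at y)"
    using smooth2_D[OF V_smooth] by metis
  obtain \<rho>' where \<rho>': "\<And>t. t \<in> I \<Longrightarrow> (\<rho> has_real_derivative \<rho>' t) (at t)"
    using \<rho>_smooth by (cases rule: smooth1_on.cases) blast
  define k where "k t = root 3 (\<rho> t / t)" for t
  define E where "E r y = - (1/3) * (U r y + r * Ux r y) + 3 * \<mu> * (Ux r y * V r y + U r y * Vx r y)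
      + \<sigma> * Uxxx r y" for r y
  have tnz: "t \<noteq> 0" if "t \<in> I" for t using I_sign that by auto
  have knz: "k t \<noteq> 0" if "t \<in> I" for t using tnz[OF that] \<rho>_nz that by (simp add: k_def)
  have k3: "k t ^ 3 = \<rho> t / t" for t
    unfolding k_def by (simp add: odd_real_root_pow)
  have dU1: "deriv (\<lambda>z. U z y) = (\<lambda>z. Ux z y)" for y
    using deriv_scaled[of "\<lambda>z. U z y" "\<lambda>z. Ux z y" 1 1, OF Ux] by simp
  have dU2: "deriv (\<lambda>z. Ux z y) = (\<lambda>z. Uxx z y)" for y
    using deriv_scaled[of "\<lambda>z. Ux z y" "\<lambda>z. Uxx z y" 1 1, OF Uxx] by simp
  have dU3: "deriv (\<lambda>z. Uxx z y) = (\<lambda>z. Uxxx z y)" for y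
    using deriv_scaled[of "\<lambda>z. Uxx z y" "\<lambda>z. Uxxx z y" 1 1, OF Uxxx] by simp
  have dUV: "deriv (\<lambda>z. U z y * V z y) r = Ux r y * V r y + U r y * Vx r y" for r y
    by (rule DERIV_imp_deriv) (rule derivative_eq_intros Ux Vx refl | simp)+
  have dVy: "deriv (\<lambda>w. V r w) y = Vy r y" for r y
    by (rule DERIV_imp_deriv) (rule Vy)
  have R: "(- (1/3) * (U r y + r * deriv (\<lambda>z. U z y) r)
              + 3 * \<mu> * deriv (\<lambda>z. U z y * V z y) r
              + \<sigma> * deriv (deriv (deriv (\<lambda>z. U z y))) r = 0
            \<and> deriv (\<lambda>z. U z y) r - deriv (\<lambda>w. V r w) y = 0)
        \<longleftrightarrow> (E r y = 0 \<and> Ux r y = Vy r y)" for r y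
    by (simp add: dU1 dU2 dU3 dUV dVy E_def)
  have L: "(\<rho> t * deriv (\<lambda>s. u x y s) t
              + 3 * \<mu> * deriv (\<lambda>z. u z y t * v z y t) x
              + \<sigma> * deriv (deriv (deriv (\<lambda>z. u z y t))) x = 0
            \<and> deriv (\<lambda>z. u z y t) x = deriv (\<lambda>w. v x w t) y)
        \<longleftrightarrow> (E (k t * x) y = 0 \<and> Ux (k t * x) y = Vy (k t * x) y)"
    if tI: "t \<in> I" for x y t
  proof -
    note kn = knz[OF tI] and tn = tnz[OF tI]
    have u1: "(\<lambda>z. u z y t) = (\<lambda>z. k t * U (k t * z) y)" by (simp add: u_def k_def)
    have du1: "deriv (\<lambda>z. u z y t) = (\<lambda>z. k t * k t * Ux (k t * z) y)"
      unfolding u1 by (rule deriv_scaled[OF Ux])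
    have du3: "deriv (deriv (deriv (\<lambda>z. u z y t))) x = k t ^ 4 * Uxxx (k t * x) y"
      unfolding du1 deriv_scaled[OF Uxx] deriv_scaled[OF Uxxx] by (simp add: power4_eq_xxxx)
    have dv: "deriv (\<lambda>w. v x w t) y = k t ^ 2 * Vy (k t * x) y"
      unfolding v_def k_def[symmetric]
      by (rule DERIV_imp_deriv) (rule derivative_eq_intros Vy refl | simp)+
    have duv: "deriv (\<lambda>z. u z y t * v z y t) x =
       k t ^ 4 * (Ux (k t * x) y * V (k t * x) y + U (k t * x) y * Vx (k t * x) y)
       - k t * deriv \<rho> t / (9 * \<mu>) * (U (k t * x) y + k t * x * Ux (k t * x) y)"
    proof -
      have D: "((\<lambda>z. (k t * U (k t * z) y) * (k t ^ 2 * V (k t * z) y - deriv \<rho> t / (9 * \<mu>) * z))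
         has_real_derivative
         (k t * (Ux (k t * z) y * k t)) * (k t ^ 2 * V (k t * z) y - deriv \<rho> t / (9 * \<mu>) * z)
         + (k t * U (k t * z) y) * (k t ^ 2 * (Vx (k t * z) y * k t) - deriv \<rho> t / (9 * \<mu>))) (at z)" for z
      proof -
        have hU: "((\<lambda>z. U (k t * z) y) has_real_derivative Ux (k t * z) y * k t) (at z)"
          by (rule DERIV_chain2[where f="\<lambda>s. U s y", OF Ux]) (auto intro!: derivative_eq_intros)
        have hV: "((\<lambda>z. V (k t * z) y) has_real_derivative Vx (k t * z) y * k t) (at z)"
          by (rule DERIV_chain2[where f="\<lambda>s. V s y", OF Vx]) (auto intro!: derivative_eq_intros)
        show ?thesis
          by (rule derivative_eq_intros hU hV refl | simp)+
      qed
      show ?thesis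
        unfolding u_def v_def k_def[symmetric]
        apply (rule DERIV_imp_deriv) apply (rule DERIV_cong[OF D]) by (simp add: algebra_simps power2_eq_square power4_eq_xxxx)
    qed
    have drt: "deriv \<rho> t = \<rho>' t" using \<rho>'[OF tI] by (rule DERIV_imp_deriv)
    have dk: "(k has_real_derivative inverse (3 * k t ^ 2) * ((\<rho>' t * t - \<rho> t) / (t * t))) (at t)"
    proof -
      have g: "((\<lambda>s. \<rho> s / s) has_real_derivative (\<rho>' t * t - \<rho> t) / (t * t)) (at t)"
        using tn by (auto intro!: derivative_eq_intros \<rho>'[OF tI] simp: field_simps)
      have "\<rho> t / t \<noteq> 0" using tn \<rho>_nz tI by simp
      from DERIV_chain2[OF DERIV_odd_real_root[of 3, OF _ this] g]
      show ?thesis unfolding k_def by (simp add: power2_eq_square)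
    qed
    have dut: "deriv (\<lambda>s. u x y s) t = inverse (3 * k t ^ 2) * ((\<rho>' t * t - \<rho> t) / (t * t))
        * (U (k t * x) y + k t * x * Ux (k t * x) y)"
    proof -
      have D: "((\<lambda>s. k s * U (k s * x) y) has_real_derivative
          inverse (3 * k t ^ 2) * ((\<rho>' t * t - \<rho> t) / (t * t)) * U (k t * x) y
          + k t * (Ux (k t * x) y * (inverse (3 * k t ^ 2) * ((\<rho>' t * t - \<rho> t) / (t * t)) * x))) (at t)"
        apply (rule DERIV_cong[OF DERIV_mult[OF dk DERIV_chain2[where f="\<lambda>s. U s y", OF Ux DERIV_cmult_right[OF dk]]]])
        by (simp add: algebra_simps)
      show ?thesis
        unfolding u_def k_def[symmetric]
        apply (rule DERIV_imp_deriv) apply (rule DERIV_cong[OF D]) by (simp add: algebra_simps add_divide_distrib[symmetric] diff_divide_distrib[symmetric])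
    qed
    have rho: "\<rho> t = k t ^ 3 * t" using k3[of t] tn by simp
    have eq1: "\<rho> t * deriv (\<lambda>s. u x y s) t
              + 3 * \<mu> * deriv (\<lambda>z. u z y t * v z y t) x
              + \<sigma> * deriv (deriv (deriv (\<lambda>z. u z y t))) x = k t ^ 4 * E (k t * x) y"
      unfolding dut duv du3 drt E_def using kn tn \<mu>_nz
      by (simp add: rho field_simps) (simp add: algebra_simps eval_nat_numeral)
    show ?thesis using kn by (simp only: eq1) (simp only: dv du1, simp add: power2_eq_square)
  qed
  show ?thesis
  proof (intro iffI allI ballI)
    fix r y
    assume H: "\<forall>x y. \<forall>t\<in>I.
            \<rho> t * deriv (\<lambda>s. u x y s) t
              + 3 * \<mu> * deriv (\<lambda>z. u z y t * v z y t) x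
              + \<sigma> * deriv (deriv (deriv (\<lambda>z. u z y t))) x = 0
            \<and> deriv (\<lambda>z. u z y t) x = deriv (\<lambda>w. v x w t) y"
    obtain t where tI: "t \<in> I" using I_ne by blast
    have "E (k t * (r / k t)) y = 0 \<and> Ux (k t * (r / k t)) y = Vy (k t * (r / k t)) y"
      using H L[OF tI, of "r / k t" y] tI by blast
    then show "- (1/3) * (U r y + r * deriv (\<lambda>z. U z y) r)
              + 3 * \<mu> * deriv (\<lambda>z. U z y * V z y) r
              + \<sigma> * deriv (deriv (deriv (\<lambda>z. U z y))) r = 0
            \<and> deriv (\<lambda>z. U z y) r - deriv (\<lambda>w. V r w) y = 0"
      using R knz[OF tI] by simp
  next
    fix x y t
    assume H: "\<forall>r y.
            - (1/3) * (U r y + r * deriv (\<lambda>z. U z y) r)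
              + 3 * \<mu> * deriv (\<lambda>z. U z y * V z y) r
              + \<sigma> * deriv (deriv (deriv (\<lambda>z. U z y))) r = 0
            \<and> deriv (\<lambda>z. U z y) r - deriv (\<lambda>w. V r w) y = 0"
      and tI: "t \<in> I"
    show "\<rho> t * deriv (\<lambda>s. u x y s) t
              + 3 * \<mu> * deriv (\<lambda>z. u z y t * v z y t) x
              + \<sigma> * deriv (deriv (deriv (\<lambda>z. u z y t))) x = 0
            \<and> deriv (\<lambda>z. u z y t) x = deriv (\<lambda>w. v x w t) y"
      using L[OF tI, of x y] R[of "k t * x" y] H by blast
  qed
qed

end
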